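(* Let $G_1$ and $G_2$ be graphs admitting arithmetic IASIs. Then the corona $G_1\circ G_2$ admits an arithmetic IASI (in which $G_1$ and each copy of $G_2$ carry labels with the deterministic indices of the given labelings) if and only if the deterministic index of every vertex of one graph is $k$ times or $1/k$ times the deterministic index of every vertex of the other, for a positive integer $k$ at most the set-indexing number of the vertex having the smaller deterministic index.
   Context: All graphs are simple, finite, with no isolated vertices; all sets are finite subsets of $\mathbb{N}_0$; $A+B=\{a+b:a\in A,b\in B\}$. An IASI of $G$ is an injective $f:V(G)\to 2^{\mathbb{N}_0}$ with $g_f(uv)=f(u)+f(v)$ injective on $E(G)$. The set-indexing number of an element is the cardinality of its set-label. An AP-set is a set whose elements form an arithmetic progression; the common difference of the set-label of an element is its deterministic index. An arithmetic IASI is an IASI under which all vertex and edge set-labels are AP-sets. The corona $G_1\circ G_2$ is obtained from one copy of $G_1$ (with $p_1$ vertices) and $p_1$ copies of $G_2$ by joining the $i$-th vertex of $G_1$ to every vertex of the $i$-th copy of $G_2$. *)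

theory Defs
  imports Main
begin

definition simple_graph :: "'a set \<Rightarrow> 'a set set \<Rightarrow> bool" where
  "simple_graph V E \<longleftrightarrow> finite V \<and>
     (\<forall>e\<in>E. \<exists>u v. u \<noteq> v \<and> u \<in> V \<and> v \<in> V \<and> e = {u, v}) \<and>
     (\<forall>v\<in>V. \<exists>e\<in>E. v \<in> e)"

definition sumset :: "nat set \<Rightarrow> nat set \<Rightarrow> nat set" where
  "sumset A B = {a + b | a b. a \<in> A \<and> b \<in> B}"

definition IASI :: "'a set \<Rightarrow> 'a set set \<Rightarrow> ('a \<Rightarrow> nat set) \<Rightarrow> bool" where
  "IASI V E f \<longleftrightarrow> inj_on f V \<and> (\<forall>v\<in>V. finite (f v)) \<and>
     (\<forall>u v x y. {u, v} \<in> E \<longrightarrow> {x, y} \<in> E \<longrightarrow>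
        sumset (f u) (f v) = sumset (f x) (f y) \<longrightarrow> {u, v} = {x, y})"

definition AP_set :: "nat set \<Rightarrow> bool" where
  "AP_set A \<longleftrightarrow> (\<exists>a d n. d > 0 \<and> n \<ge> 2 \<and> A = {a + d * i | i. i < n})"

definition det_index :: "nat set \<Rightarrow> nat" where
  "det_index A = (THE d. \<exists>a n. d > 0 \<and> n \<ge> 2 \<and> A = {a + d * i | i. i < n})"

abbreviation set_indexing_number :: "nat set \<Rightarrow> nat" where
  "set_indexing_number A \<equiv> card A"

definition arithmetic_IASI :: "'a set \<Rightarrow> 'a set set \<Rightarrow> ('a \<Rightarrow> nat set) \<Rightarrow> bool" where
  "arithmetic_IASI V E f \<longleftrightarrow> IASI V E f \<and> (\<forall>v\<in>V. AP_set (f v)) \<and>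
     (\<forall>u v. {u, v} \<in> E \<longrightarrow> AP_set (sumset (f u) (f v)))"

text \<open>Corona G1 o G2: vertex Inl u is the vertex u of G1, vertex Inr (u, w) is the copy
  of vertex w of G2 in the copy attached to u.\<close>
definition corona_V :: "'a set \<Rightarrow> 'b set \<Rightarrow> ('a + 'a \<times> 'b) set" where
  "corona_V V1 V2 = Inl ` V1 \<union> Inr ` (V1 \<times> V2)"

definition corona_E :: "'a set \<Rightarrow> 'a set set \<Rightarrow> 'b set \<Rightarrow> 'b set set \<Rightarrow> ('a + 'a \<times> 'b) set set" where
  "corona_E V1 E1 V2 E2 =
     {{Inl u, Inl v} | u v. {u, v} \<in> E1} \<union>
     {{Inr (u, w), Inr (u, w')} | u w w'. u \<in> V1 \<and> {w, w'} \<in> E2} \<union>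
     {{Inl u, Inr (u, w)} | u w. u \<in> V1 \<and> w \<in> V2}"

end

theory Submission
  imports Defs
begin



definition ap :: "nat \<Rightarrow> nat \<Rightarrow> nat \<Rightarrow> nat set" where
  "ap a d n = (\<lambda>i. a + d*i) ` {..<n}"

lemma ap_eq: "{a + d * i | i. i < n} = ap a d n"
  unfolding ap_def by auto

lemma AP_set_iff: "AP_set A \<longleftrightarrow> (\<exists>a d n. d>0 \<and> n\<ge>2 \<and> A = ap a d n)"
  unfolding AP_set_def ap_eq by simp

lemma ap_mem: "x \<in> ap a d n \<longleftrightarrow> (\<exists>i<n. x = a + d*i)"
  unfolding ap_def by auto

lemma ap_min: "n \<ge> 1 \<Longrightarrow> a \<in> ap a d n"
  unfolding ap_mem by (rule exI[of _ 0]) auto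

lemma ap_ge: "x \<in> ap a d n \<Longrightarrow> a \<le> x"
  unfolding ap_mem by auto

lemma ap_start: "ap a d n = ap a' d' n' \<Longrightarrow> n \<ge> 1 \<Longrightarrow> n' \<ge> 1 \<Longrightarrow> a = a'"
  by (metis ap_ge ap_min antisym)

lemma card_ap: "d > 0 \<Longrightarrow> card (ap a d n) = n"
  unfolding ap_def by (subst card_image) (auto simp: inj_on_def)

lemma ap_diff_le:
  assumes "ap a d n = ap a' d' n'" "d>0" "n\<ge>2" "n'\<ge>2" "d'>0"
  shows "d' \<le> d"
proof -
  have aa: "a = a'" using ap_start[OF assms(1)] assms by simp
  have "a + d \<in> ap a d n" unfolding ap_mem using assms by (intro exI[of _ 1]) auto
  then have "a + d \<in> ap a' d' n'" using assms(1) by simp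
  then obtain i where i: "i < n'" "a + d = a' + d'*i" unfolding ap_mem by blast
  then have "i \<ge> 1" using aa assms by (cases i) auto
  then have "d' \<le> d'*i" by simp
  then show ?thesis using i aa by simp
qed

lemma ap_det: "d>0 \<Longrightarrow> n\<ge>2 \<Longrightarrow> det_index (ap a d n) = d"
  unfolding det_index_def ap_eq
proof (rule the_equality)
  assume "d>0" "n\<ge>2" then show "\<exists>a' n'. d > 0 \<and> n' \<ge> 2 \<and> ap a d n = ap a' d n'" by blast
next
  fix d' assume *: "d>0" "n\<ge>2" "\<exists>a' n'. d' > 0 \<and> n' \<ge> 2 \<and> ap a d n = ap a' d' n'"
  then obtain a' n' where "d' > 0" "n' \<ge> 2" "ap a d n = ap a' d' n'" by blast
  then have "d' \<le> d" "d \<le> d'" using ap_diff_le[of a d n a' d' n'] ap_diff_le[of a' d' n' a d n] * by auto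
  then show "d' = d" by (rule antisym)
qed

lemma AP_set_ap: "AP_set A \<Longrightarrow> \<exists>a. A = ap a (det_index A) (card A) \<and> det_index A > 0 \<and> card A \<ge> 2"
proof -
  assume "AP_set A"
  then obtain a d n where h: "d>0" "n\<ge>2" "A = ap a d n" unfolding AP_set_iff by blast
  then have "det_index A = d" "card A = n" using ap_det card_ap by auto
  then show ?thesis using h by auto
qed

lemma ap_shift: "ap a d n = (+) a ` ap 0 d n"
  unfolding ap_def by auto

lemma sumset_shift: "sumset ((+) a ` A) ((+) b ` B) = (+) (a+b) ` sumset A B"
  unfolding sumset_def by (auto simp: image_iff) (metis add.assoc add.left_commute)+

lemma sumset_commute: "sumset A B = sumset B A"
  unfolding sumset_def by (auto; metis add.commute)

lemma AP_shift: "AP_set ((+) c ` A) \<longleftrightarrow> AP_set A"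
proof
  assume "AP_set A" then obtain a d n where "d>0" "n\<ge>2" "A = ap a d n" unfolding AP_set_iff by blast
  then show "AP_set ((+) c ` A)" unfolding AP_set_iff
    by (intro exI[of _ "c+a"] exI[of _ d] exI[of _ n]) (auto simp: ap_def image_image add.assoc)
next
  assume "AP_set ((+) c ` A)"
  then obtain a d n where h: "d>0" "n\<ge>2" "(+) c ` A = ap a d n" unfolding AP_set_iff by blast
  have "a \<in> (+) c ` A" using h ap_min by simp
  then have ca: "c \<le> a" by auto
  have "A = ap (a - c) d n"
  proof -
    have "x \<in> A \<longleftrightarrow> c + x \<in> ap a d n" for x using h(3) by (metis add_left_cancel image_iff)
    then have "x \<in> A \<longleftrightarrow> (\<exists>i<n. c + x = a + d*i)" for x unfolding ap_mem by simp
    moreover have "(c + x = a + d*i) \<longleftrightarrow> (x = (a - c) + d*i)" for x i using ca by auto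
    ultimately show ?thesis unfolding set_eq_iff ap_mem by auto
  qed
  then show "AP_set A" unfolding AP_set_iff using h by (intro exI[of _ "a-c"] exI[of _ d] exI[of _ n]) simp
qed



lemma sumset_ap_mem: "x \<in> sumset (ap a d n) (ap b e m) \<longleftrightarrow> (\<exists>i<n. \<exists>j<m. x = (a + d*i) + (b + e*j))"
  unfolding sumset_def ap_mem by blast

lemma core_if:
  assumes "e = k*d" "k \<le> n" "k > 0" "d > 0" "n \<ge> 2" "m \<ge> 2"
  shows "sumset (ap 0 d n) (ap 0 e m) = ap 0 d (n + k*(m-1))"
proof (rule set_eqI)
  fix x
  show "x \<in> sumset (ap 0 d n) (ap 0 e m) \<longleftrightarrow> x \<in> ap 0 d (n + k*(m-1))"
  proof
    assume "x \<in> sumset (ap 0 d n) (ap 0 e m)"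
    then obtain i j where ij: "i<n" "j<m" "x = d*i + e*j" unfolding sumset_ap_mem by auto
    have "k*j \<le> k*(m-1)" using ij by (intro mult_le_mono2) simp
    then have "i + k*j < n + k*(m-1)" using ij by linarith
    moreover have "x = d*(i+k*j)" using ij assms by (simp add: algebra_simps)
    ultimately show "x \<in> ap 0 d (n + k*(m-1))" unfolding ap_mem by auto
  next
    assume "x \<in> ap 0 d (n + k*(m-1))"
    then obtain t where t: "t < n + k*(m-1)" "x = d*t" unfolding ap_mem by auto
    define j where "j = min (t div k) (m-1)"
    have kj: "k*j \<le> t" unfolding j_def
      by (metis div_mult_self1_is_m dual_order.trans mult.commute div_times_less_eq_dividend min.cobounded1 mult_le_mono2 assms(3))
    define i where "i = t - k*j"
    have "i < n"
    proof (cases "t div k \<le> m - 1")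
      case True
      then have "j = t div k" unfolding j_def by simp
      then have "i = t mod k" unfolding i_def by (simp add: minus_mult_div_eq_mod)
      then show ?thesis using assms by (metis mod_less_divisor order_less_le_trans)
    next
      case False
      then have "j = m - 1" unfolding j_def by simp
      then show ?thesis unfolding i_def using t assms by simp
    qed
    moreover have "j < m" unfolding j_def using assms by simp
    moreover have "x = d*i + e*j" using kj t assms unfolding i_def
      by (simp add: algebra_simps)
    ultimately show "x \<in> sumset (ap 0 d n) (ap 0 e m)" unfolding sumset_ap_mem by auto
  qed
qed

lemma core_only:
  assumes "AP_set (sumset (ap 0 d n) (ap 0 e m))" "d \<le> e" "d > 0" "e > 0" "n \<ge> 2" "m \<ge> 2"
  shows "\<exists>k>0. e = k*d \<and> k \<le> n"
proof -
  let ?S = "sumset (ap 0 d n) (ap 0 e m)"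
  obtain a c N where h: "c>0" "N\<ge>2" "?S = ap a c N" using assms(1) unfolding AP_set_iff by blast
  have mem: "x \<in> ?S \<longleftrightarrow> (\<exists>i<N. x = a + c*i)" for x using h(3) ap_mem by simp
  have S: "x \<in> ?S \<longleftrightarrow> (\<exists>i<n. \<exists>j<m. x = d*i + e*j)" for x unfolding sumset_ap_mem by simp
  have "0 \<in> ?S" unfolding S using assms by (intro exI[of _ 0]) auto
  then have a0: "a = 0" using mem[of 0] by auto
  have "c \<in> ?S" unfolding mem using h a0 by (intro exI[of _ 1]) auto
  then obtain i j where ij: "i<n" "j<m" "c = d*i + e*j" unfolding S by auto
  have cd: "d \<le> c"
  proof (cases "i = 0")
    case True
    then have "j \<noteq> 0" using ij h by auto
    then have "e \<le> e*j" by simp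
    then show ?thesis using ij assms by linarith
  next
    case False
    then have "d \<le> d*i" by simp
    then show ?thesis using ij by linarith
  qed
  have "d \<in> ?S" unfolding S using assms by (intro exI[of _ 1] exI[of _ 0]) auto
  then obtain i' where i': "d = c*i'" using a0 unfolding mem by auto
  then have "i' \<noteq> 0" using assms by auto
  then have "c \<le> d" using i' by simp
  then have cd': "c = d" using cd by simp
  have "e \<in> ?S" unfolding S using assms by (intro exI[of _ 0] exI[of _ 1]) auto
  then obtain k where k: "e = d*k" using a0 cd' unfolding mem by auto
  then have kpos: "k > 0" using assms by (cases k) auto
  have "k \<le> n"
  proof (rule ccontr)
    assume kn: "\<not> k \<le> n"
    have "d*(n-1) + e \<in> ?S" unfolding S using assms by (intro exI[of _ "n-1"] exI[of _ 1]) auto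
    then obtain t where t: "t < N" "d*(n-1) + e = d*t" using a0 cd' unfolding mem by auto
    have "d*(n-1) + e = d*(n-1+k)" using k by (simp add: algebra_simps)
    then have "t = n - 1 + k" using t assms by simp
    then have "n < N" using t kn by linarith
    then have "d*n \<in> ?S" unfolding mem a0 cd' by auto
    then obtain i2 j2 where ij2: "i2<n" "j2<m" "d*n = d*i2 + e*j2" unfolding S by auto
    then have "d*n = d*(i2 + k*j2)" using k by (simp add: algebra_simps)
    then have "n = i2 + k*j2" using assms by simp
    moreover have "j2 \<noteq> 0" using ij2 \<open>n = i2 + k*j2\<close> by auto
    then have "k \<le> k*j2" by simp
    ultimately show False using kn by linarith
  qed
  then show ?thesis using k kpos by (auto simp: mult.commute)
qed

definition cond :: "nat \<Rightarrow> nat \<Rightarrow> nat \<Rightarrow> nat \<Rightarrow> bool" where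
  "cond d n e m \<longleftrightarrow> (\<exists>k::nat. k > 0 \<and> ((e = k * d \<and> k \<le> n) \<or> (d = k * e \<and> k \<le> m)))"

lemma core0:
  assumes "d > 0" "e > 0" "n \<ge> 2" "m \<ge> 2"
  shows "AP_set (sumset (ap 0 d n) (ap 0 e m)) \<longleftrightarrow> cond d n e m"
proof
  assume A: "AP_set (sumset (ap 0 d n) (ap 0 e m))"
  show "cond d n e m"
  proof (cases "d \<le> e")
    case True then show ?thesis using core_only[OF A True assms(1,2,3,4)] unfolding cond_def by blast
  next
    case False
    have "AP_set (sumset (ap 0 e m) (ap 0 d n))" using A by (simp only: sumset_commute[of "ap 0 e m"])
    then show ?thesis using core_only[of e m d n] False assms unfolding cond_def by auto
  qed
next
  assume "cond d n e m"
  then obtain k where k: "k>0" "(e = k * d \<and> k \<le> n) \<or> (d = k * e \<and> k \<le> m)" unfolding cond_def by blast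
  then show "AP_set (sumset (ap 0 d n) (ap 0 e m))"
  proof (elim disjE conjE)
    assume ek: "e = k*d" "k \<le> n"
    have "sumset (ap 0 d n) (ap 0 e m) = ap 0 d (n + k*(m-1))" using core_if[OF ek k(1) assms(1) assms(3) assms(4)] .
    moreover have "2 \<le> n + k*(m-1)" using assms by simp
    ultimately show ?thesis unfolding AP_set_iff using assms(1) by blast
  next
    assume dk: "d = k*e" "k \<le> m"
    have "sumset (ap 0 e m) (ap 0 d n) = ap 0 e (m + k*(n-1))" using core_if[OF dk k(1) assms(2) assms(4) assms(3)] .
    then have "sumset (ap 0 d n) (ap 0 e m) = ap 0 e (m + k*(n-1))" by (metis sumset_commute)
    moreover have "2 \<le> m + k*(n-1)" using assms by simp
    ultimately show ?thesis unfolding AP_set_iff using assms(2) by blast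
  qed
qed

lemma core:
  assumes "d > 0" "e > 0" "n \<ge> 2" "m \<ge> 2"
  shows "AP_set (sumset (ap a d n) (ap b e m)) \<longleftrightarrow> cond d n e m"
proof -
  have "sumset (ap a d n) (ap b e m) = (+) (a+b) ` sumset (ap 0 d n) (ap 0 e m)"
    by (simp only: ap_shift[of a d n] ap_shift[of b e m] sumset_shift)
  then show ?thesis using core0[OF assms] AP_shift by simp
qed

lemma sumset_ap_min:
  assumes "n\<ge>1" "m\<ge>1"
  shows "a + b \<in> sumset (ap a d n) (ap b e m)" "x \<in> sumset (ap a d n) (ap b e m) \<Longrightarrow> a + b \<le> x"
proof -
  show "a + b \<in> sumset (ap a d n) (ap b e m)" unfolding sumset_ap_mem using assms
    by (intro exI[of _ 0] conjI) auto
  show "x \<in> sumset (ap a d n) (ap b e m) \<Longrightarrow> a + b \<le> x" unfolding sumset_ap_mem by auto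
qed

lemma pow2_ord:
  assumes "i < j" "k < l" "(2::nat)^i + 2^j = 2^k + 2^l"
  shows "i = k \<and> j = l"
proof -
  have ne: False if "i < k" "i < j" "k < l" "(2::nat)^i + 2^j = 2^k + 2^l" for i j k l
  proof -
    have "(2::nat)^i + 2^j = 2^i * (1 + 2^(j-i))" using that by (simp add: algebra_simps flip: power_add)
    moreover have "(2::nat)^k + 2^l = 2^i * (2^(k-i) * (1 + 2^(l-k)))" using that by (simp add: algebra_simps flip: power_add)
    ultimately have "(2::nat)^i * (1 + 2^(j-i)) = 2^i * (2^(k-i) * (1 + 2^(l-k)))" using that by simp
    then have "(1::nat) + 2^(j-i) = 2^(k-i) * (1 + 2^(l-k))" by (metis mult_left_cancel power_not_zero zero_neq_numeral)
    moreover have o: "odd ((1::nat) + 2^(j-i))" using that by simp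
    moreover have ev: "even ((2::nat)^(k-i) * (1 + 2^(l-k)))" using that by simp
    ultimately show False by metis
  qed
  have "i = k" using ne[of i k j l] ne[of k i l j] assms by (metis linorder_neqE_nat)
  then show ?thesis using assms by simp
qed

lemma pow2:
  assumes "i \<noteq> j" "k \<noteq> l" "(2::nat)^i + 2^j = 2^k + 2^l"
  shows "{i,j} = {k,l}"
  using pow2_ord[of i j k l] pow2_ord[of j i k l] pow2_ord[of i j l k] pow2_ord[of j i l k] assms
  by (cases "i < j"; cases "k < l") (auto simp: add.commute insert_commute)



lemma finite_sumset: "finite A \<Longrightarrow> finite B \<Longrightarrow> finite (sumset A B)"
proof -
  assume "finite A" "finite B"
  moreover have "sumset A B = (\<lambda>(a,b). a+b) ` (A \<times> B)" unfolding sumset_def by auto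
  ultimately show ?thesis by simp
qed

lemma finite_ap: "finite (ap a d n)" unfolding ap_def by simp

lemma sg_edge: "simple_graph V E \<Longrightarrow> {a,b} \<in> E \<Longrightarrow> a \<in> V \<and> b \<in> V \<and> a \<noteq> b"
  unfolding simple_graph_def by (metis doubleton_eq_iff)

lemma edge_cases:
  assumes "simple_graph V1 E1" "simple_graph V2 E2" "{u,v} \<in> corona_E V1 E1 V2 E2"
  shows "(\<exists>a b. a\<in>V1 \<and> b\<in>V1 \<and> a\<noteq>b \<and> {a,b}\<in>E1 \<and> u = Inl a \<and> v = Inl b) \<or>
    (\<exists>c w w'. c\<in>V1 \<and> w\<in>V2 \<and> w'\<in>V2 \<and> w\<noteq>w' \<and> {w,w'}\<in>E2 \<and> u = Inr(c,w) \<and> v = Inr(c,w')) \<or>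
    (\<exists>c w. c\<in>V1 \<and> w\<in>V2 \<and> (u = Inl c \<and> v = Inr(c,w) \<or> u = Inr(c,w) \<and> v = Inl c))"
  using assms(3) unfolding corona_E_def
proof (elim UnE CollectE exE conjE)
  fix a b assume q: "{u,v} = {Inl a, Inl b}" and e: "{a,b} \<in> E1"
  have e': "{b,a} \<in> E1" using e by (simp add: insert_commute)
  have ab: "a \<in> V1" "b \<in> V1" "a \<noteq> b" using sg_edge[OF assms(1) e] by auto
  from q have "(u = Inl a \<and> v = Inl b) \<or> (u = Inl b \<and> v = Inl a)" unfolding doubleton_eq_iff .
  then show ?thesis
  proof
    assume "u = Inl a \<and> v = Inl b" then show ?thesis using ab e by blast
  next
    assume "u = Inl b \<and> v = Inl a" then show ?thesis using ab e' by blast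
  qed
next
  fix c w w' assume q: "{u,v} = {Inr (c,w), Inr (c,w')}" and c: "c \<in> V1" and e: "{w,w'} \<in> E2"
  have e': "{w',w} \<in> E2" using e by (simp add: insert_commute)
  have ab: "w \<in> V2" "w' \<in> V2" "w \<noteq> w'" using sg_edge[OF assms(2) e] by auto
  from q have "(u = Inr (c,w) \<and> v = Inr (c,w')) \<or> (u = Inr (c,w') \<and> v = Inr (c,w))" unfolding doubleton_eq_iff .
  then show ?thesis
  proof
    assume "u = Inr (c,w) \<and> v = Inr (c,w')" then show ?thesis using ab c e by blast
  next
    assume "u = Inr (c,w') \<and> v = Inr (c,w)" then show ?thesis using ab c e' by blast
  qed
next
  fix c w assume "{u,v} = {Inl c, Inr (c,w)}" "c \<in> V1" "w \<in> V2"
  then have "(u = Inl c \<and> v = Inr (c,w)) \<or> (u = Inr (c,w) \<and> v = Inl c)" unfolding doubleton_eq_iff by simp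
  then show ?thesis using \<open>c \<in> V1\<close> \<open>w \<in> V2\<close> by blast
qed

lemma edge_V:
  assumes "simple_graph V1 E1" "simple_graph V2 E2" "{u,v} \<in> corona_E V1 E1 V2 E2"
  shows "u \<in> corona_V V1 V2 \<and> v \<in> corona_V V1 V2 \<and> u \<noteq> v"
  using edge_cases[OF assms] unfolding corona_V_def by (elim disjE exE conjE) auto

theorem mainTheorem10:
  fixes V1 :: "'a set" and E1 :: "'a set set" and f1 :: "'a \<Rightarrow> nat set"
    and V2 :: "'b set" and E2 :: "'b set set" and f2 :: "'b \<Rightarrow> nat set"
  assumes "simple_graph V1 E1" and "simple_graph V2 E2"
    and "arithmetic_IASI V1 E1 f1" and "arithmetic_IASI V2 E2 f2"
  shows "(\<exists>h. arithmetic_IASI (corona_V V1 V2) (corona_E V1 E1 V2 E2) h \<and>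
            (\<forall>u\<in>V1. det_index (h (Inl u)) = det_index (f1 u) \<and>
                      set_indexing_number (h (Inl u)) = set_indexing_number (f1 u)) \<and>
            (\<forall>u\<in>V1. \<forall>w\<in>V2. det_index (h (Inr (u, w))) = det_index (f2 w) \<and>
                      set_indexing_number (h (Inr (u, w))) = set_indexing_number (f2 w)))
         \<longleftrightarrow>
         (\<forall>u\<in>V1. \<forall>w\<in>V2. \<exists>k::nat. k > 0 \<and>
            ((det_index (f2 w) = k * det_index (f1 u) \<and> k \<le> set_indexing_number (f1 u)) \<or>
             (det_index (f1 u) = k * det_index (f2 w) \<and> k \<le> set_indexing_number (f2 w))))"
    (is "?L \<longleftrightarrow> ?R")
proof
  assume ?L
  then obtain h where hA: "arithmetic_IASI (corona_V V1 V2) (corona_E V1 E1 V2 E2) h"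
    and h1: "\<forall>u\<in>V1. det_index (h (Inl u)) = det_index (f1 u) \<and> card (h (Inl u)) = card (f1 u)"
    and h2: "\<forall>u\<in>V1. \<forall>w\<in>V2. det_index (h (Inr (u, w))) = det_index (f2 w) \<and> card (h (Inr (u, w))) = card (f2 w)"
    by blast
  show ?R
  proof (intro ballI)
    fix u w assume u: "u \<in> V1" and w: "w \<in> V2"
    have "{Inl u, Inr (u,w)} \<in> corona_E V1 E1 V2 E2" unfolding corona_E_def using u w by blast
    then have S: "AP_set (sumset (h (Inl u)) (h (Inr (u,w))))" using hA unfolding arithmetic_IASI_def by blast
    have "Inl u \<in> corona_V V1 V2" "Inr (u,w) \<in> corona_V V1 V2" unfolding corona_V_def using u w by auto
    then have "AP_set (h (Inl u))" "AP_set (h (Inr (u,w)))" using hA unfolding arithmetic_IASI_def by auto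
    then obtain a b where
      a: "h (Inl u) = ap a (det_index (f1 u)) (card (f1 u))" "det_index (f1 u) > 0" "card (f1 u) \<ge> 2" and
      b: "h (Inr (u,w)) = ap b (det_index (f2 w)) (card (f2 w))" "det_index (f2 w) > 0" "card (f2 w) \<ge> 2"
      using AP_set_ap h1 h2 u w by metis
    have "cond (det_index (f1 u)) (card (f1 u)) (det_index (f2 w)) (card (f2 w))"
      using S core[OF a(2) b(2) a(3) b(3)] a(1) b(1) by simp
    then show "\<exists>k::nat. k > 0 \<and>
            ((det_index (f2 w) = k * det_index (f1 u) \<and> k \<le> card (f1 u)) \<or>
             (det_index (f1 u) = k * det_index (f2 w) \<and> k \<le> card (f2 w)))"
      unfolding cond_def by blast
  qed
next
  assume R: ?R
  let ?CV = "corona_V V1 V2" and ?CE = "corona_E V1 E1 V2 E2"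
  have fin: "finite ?CV" using assms(1,2) unfolding simple_graph_def corona_V_def by auto
  obtain idx :: "('a + 'a \<times> 'b) \<Rightarrow> nat" where idx: "inj_on idx ?CV"
    using finite_imp_inj_to_nat_seg[OF fin] by blast
  define D :: "'a + 'a \<times> 'b \<Rightarrow> nat" where "D x = (case x of Inl u \<Rightarrow> det_index (f1 u) | Inr p \<Rightarrow> det_index (f2 (snd p)))" for x
  define Nn :: "'a + 'a \<times> 'b \<Rightarrow> nat" where "Nn x = (case x of Inl u \<Rightarrow> card (f1 u) | Inr p \<Rightarrow> card (f2 (snd p)))" for x
  define h :: "'a + 'a \<times> 'b \<Rightarrow> nat set" where "h x = ap (2 ^ idx x) (D x) (Nn x)" for x
  have f1p: "det_index (f1 u) > 0 \<and> card (f1 u) \<ge> 2 \<and> (\<exists>a. f1 u = ap a (det_index (f1 u)) (card (f1 u)))"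
    if "u \<in> V1" for u using that assms(3) AP_set_ap unfolding arithmetic_IASI_def by blast
  have f2p: "det_index (f2 w) > 0 \<and> card (f2 w) \<ge> 2 \<and> (\<exists>a. f2 w = ap a (det_index (f2 w)) (card (f2 w)))"
    if "w \<in> V2" for w using that assms(4) AP_set_ap unfolding arithmetic_IASI_def by blast
  have DN: "D x > 0 \<and> Nn x \<ge> 2" if "x \<in> ?CV" for x
    using that f1p f2p unfolding corona_V_def D_def Nn_def by auto
  have hdc: "det_index (h x) = D x \<and> card (h x) = Nn x" if "x \<in> ?CV" for x
    using DN[OF that] ap_det card_ap unfolding h_def by auto
  have hAP: "AP_set (h x)" if "x \<in> ?CV" for x
    using DN[OF that] unfolding h_def AP_set_iff by blast
  have E1AP: "cond (det_index (f1 a)) (card (f1 a)) (det_index (f1 b)) (card (f1 b))"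
    if "{a,b} \<in> E1" for a b
  proof -
    have ab: "a \<in> V1" "b \<in> V1" using sg_edge[OF assms(1) that] by auto
    obtain a1 b1 where "f1 a = ap a1 (det_index (f1 a)) (card (f1 a))" "f1 b = ap b1 (det_index (f1 b)) (card (f1 b))"
      using f1p ab by metis
    moreover have "AP_set (sumset (f1 a) (f1 b))" using assms(3) that unfolding arithmetic_IASI_def by blast
    ultimately show ?thesis using core f1p ab by metis
  qed
  have E2AP: "cond (det_index (f2 a)) (card (f2 a)) (det_index (f2 b)) (card (f2 b))"
    if "{a,b} \<in> E2" for a b
  proof -
    have ab: "a \<in> V2" "b \<in> V2" using sg_edge[OF assms(2) that] by auto
    obtain a1 b1 where "f2 a = ap a1 (det_index (f2 a)) (card (f2 a))" "f2 b = ap b1 (det_index (f2 b)) (card (f2 b))"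
      using f2p ab by metis
    moreover have "AP_set (sumset (f2 a) (f2 b))" using assms(4) that unfolding arithmetic_IASI_def by blast
    ultimately show ?thesis using core f2p ab by metis
  qed
  have hsum: "AP_set (sumset (h u) (h v)) \<longleftrightarrow> cond (D u) (Nn u) (D v) (Nn v)"
    if "u \<in> ?CV" "v \<in> ?CV" for u v
    using core DN that unfolding h_def by blast
  have edgeAP: "AP_set (sumset (h u) (h v))" if e: "{u,v} \<in> ?CE" for u v
  proof -
    have uv: "u \<in> ?CV" "v \<in> ?CV" using edge_V[OF assms(1,2) e] by auto
    have "cond (D u) (Nn u) (D v) (Nn v)"
      using edge_cases[OF assms(1,2) e]
    proof (elim disjE exE conjE)
      fix a b assume "{a,b} \<in> E1" "u = Inl a" "v = Inl b"
      then show ?thesis using E1AP unfolding D_def Nn_def by simp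
    next
      fix c w w' assume "{w,w'} \<in> E2" "u = Inr (c,w)" "v = Inr (c,w')"
      then show ?thesis using E2AP unfolding D_def Nn_def by simp
    next
      fix c w assume "c \<in> V1" "w \<in> V2" "u = Inl c" "v = Inr (c, w)"
      then show ?thesis using R unfolding D_def Nn_def cond_def by simp
    next
      fix c w assume "c \<in> V1" "w \<in> V2" "u = Inr (c, w)" "v = Inl c"
      then show ?thesis using R unfolding D_def Nn_def cond_def by auto
    qed
    then show ?thesis using hsum[OF uv] by simp
  qed
  have hinj: "inj_on h ?CV"
  proof (rule inj_onI)
    fix x y assume "x \<in> ?CV" "y \<in> ?CV" "h x = h y"
    then have "(2::nat) ^ idx x = 2 ^ idx y" using ap_start DN unfolding h_def by (metis one_le_numeral order_trans)
    then have "idx x = idx y" by simp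
    then show "x = y" using idx \<open>x \<in> ?CV\<close> \<open>y \<in> ?CV\<close> inj_on_def by metis
  qed
  have hmin: "Min (sumset (h u) (h v)) = 2 ^ idx u + 2 ^ idx v" if "u \<in> ?CV" "v \<in> ?CV" for u v
  proof -
    have n: "Nn u \<ge> 1" "Nn v \<ge> 1" using DN that by (metis one_le_numeral order_trans)+
    have fs: "finite (sumset (h u) (h v))" unfolding h_def by (intro finite_sumset finite_ap)
    show ?thesis unfolding h_def
      by (rule Min_eqI) (use fs sumset_ap_min[OF n] in \<open>auto simp: h_def\<close>)
  qed
  have hedge: "{u,v} = {x,y}" if "{u,v} \<in> ?CE" "{x,y} \<in> ?CE" "sumset (h u) (h v) = sumset (h x) (h y)" for u v x y
  proof -
    have uv: "u \<in> ?CV" "v \<in> ?CV" "u \<noteq> v" using edge_V[OF assms(1,2) that(1)] by auto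
    have xy: "x \<in> ?CV" "y \<in> ?CV" "x \<noteq> y" using edge_V[OF assms(1,2) that(2)] by auto
    have "(2::nat) ^ idx u + 2 ^ idx v = 2 ^ idx x + 2 ^ idx y" using hmin uv xy that(3) by metis
    moreover have "idx u \<noteq> idx v" "idx x \<noteq> idx y" using uv xy idx inj_on_def by metis+
    ultimately have "{idx u, idx v} = {idx x, idx y}" using pow2 by blast
    then show ?thesis using uv xy idx unfolding doubleton_eq_iff inj_on_def by metis
  qed
  have "\<forall>v\<in>?CV. finite (h v)" unfolding h_def using finite_ap by blast
  then have "IASI ?CV ?CE h" unfolding IASI_def using hinj hedge by blast
  then have "arithmetic_IASI ?CV ?CE h"
    unfolding arithmetic_IASI_def using hAP edgeAP by blast
  moreover have "\<forall>u\<in>V1. det_index (h (Inl u)) = det_index (f1 u) \<and> card (h (Inl u)) = card (f1 u)"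
    using hdc unfolding corona_V_def D_def Nn_def by auto
  moreover have "\<forall>u\<in>V1. \<forall>w\<in>V2. det_index (h (Inr (u, w))) = det_index (f2 w) \<and> card (h (Inr (u, w))) = card (f2 w)"
    using hdc unfolding corona_V_def D_def Nn_def by force
  ultimately show ?L by blast
qed

end
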